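(* Let $K$ be a number field, let $X\subseteq M_d(K)$ be closed in the linear Zariski topology, and let $\mathcal S=\langle X\rangle$. Let $r\ge0$ and let $Y,T\subseteq M_d(K)$ be closed sets such that $X\cup\{B\in\mathcal S:\operatorname{rank}(B)>r\}\subseteq Y$, and set $Y'\coloneqq\overline{(Y\cup T)^{\le 2\binom{d}{r}+3}}$. If there exists $A=A_1\cdots A_n\in\mathcal S\setminus Y'$ with $A_1,\ldots,A_n\in X$ and $\operatorname{rank}(A)\ge r$, then there exist $k<l$ such that the subproduct $A'=A_k\cdots A_l$ is completely pseudo-regular of rank $r$ and not contained in $Y\cup T$.
   Context: The linear Zariski topology on $M_d(K)$ has as closed sets the finite unions of vector subspaces, and $\overline{\,\cdot\,}$ denotes closure in it. $\langle X\rangle$ is the subsemigroup generated by $X$. For $Z\subseteq M_d(K)$ and $n\ge1$, $Z^{\le n}=\{C_1\cdots C_k: k\in[1,n], C_1,\ldots,C_k\in Z\}$. A matrix $C$ is completely pseudo-regular if it lies in a subgroup of the multiplicative semigroup $M_d(K)$ (equivalently $\operatorname{im}C\cap\ker C=0$). *)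

theory Defs
  imports "HOL-Analysis.Analysis"
begin

definition number_field :: "'a::field_char_0 itself \<Rightarrow> bool" where
  "number_field _ \<longleftrightarrow> (\<exists>B::'a set. finite B \<and>
      (\<forall>x::'a. \<exists>c::'a \<Rightarrow> rat. x = (\<Sum>b\<in>B. of_rat (c b) * b)))"

definition mscale :: "'a::field \<Rightarrow> 'a^'n^'n \<Rightarrow> 'a^'n^'n" where
  "mscale c A = (\<chi> i j. c * A $ i $ j)"

definition msubspace :: "('a::field^'n^'n) set \<Rightarrow> bool" where
  "msubspace V \<longleftrightarrow> 0 \<in> V \<and> (\<forall>A\<in>V. \<forall>B\<in>V. A + B \<in> V) \<and>
      (\<forall>c. \<forall>A\<in>V. mscale c A \<in> V)"

text \<open>Closed sets of the linear Zariski topology: finite unions of vector subspaces.\<close>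
definition lz_closed :: "('a::field^'n^'n) set \<Rightarrow> bool" where
  "lz_closed Z \<longleftrightarrow> (\<exists>F. finite F \<and> (\<forall>V\<in>F. msubspace V) \<and> Z = \<Union>F)"

definition lz_closure :: "('a::field^'n^'n) set \<Rightarrow> ('a^'n^'n) set" where
  "lz_closure Z = \<Inter>{C. lz_closed C \<and> Z \<subseteq> C}"

definition mprod :: "('a::field^'n^'n) list \<Rightarrow> 'a^'n^'n" where
  "mprod xs = foldr (\<lambda>A B. A ** B) xs (mat 1)"

definition gen_semigroup :: "('a::field^'n^'n) set \<Rightarrow> ('a^'n^'n) set" where
  "gen_semigroup X = {mprod xs | xs. xs \<noteq> [] \<and> set xs \<subseteq> X}"

definition prods_le :: "('a::field^'n^'n) set \<Rightarrow> nat \<Rightarrow> ('a^'n^'n) set" where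
  "prods_le Z n = {mprod xs | xs. xs \<noteq> [] \<and> length xs \<le> n \<and> set xs \<subseteq> Z}"

definition is_subgroup_mult :: "('a::field^'n^'n) set \<Rightarrow> bool" where
  "is_subgroup_mult G \<longleftrightarrow> (\<forall>A\<in>G. \<forall>B\<in>G. A ** B \<in> G) \<and>
     (\<exists>e\<in>G. (\<forall>A\<in>G. e ** A = A \<and> A ** e = A) \<and>
            (\<forall>A\<in>G. \<exists>B\<in>G. A ** B = e \<and> B ** A = e))"

definition completely_pseudo_regular :: "'a::field^'n^'n \<Rightarrow> bool" where
  "completely_pseudo_regular C \<longleftrightarrow> (\<exists>G. is_subgroup_mult G \<and> C \<in> G)"

end

theory Submission
  imports Defs
begin

definition rimg :: "'a::field^'n^'n \<Rightarrow> ('a^'n) set" where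
  "rimg M = range (\<lambda>x. x v* M)"
definition rker :: "'a::field^'n^'n \<Rightarrow> ('a^'n) set" where
  "rker M = {x. x v* M = 0}"

lemma vm_tr: "x v* M = transpose M *v (x::'a::field^'n)"
  by simp

lemma lin_vm: "Vector_Spaces.linear (*s) (*s) (\<lambda>x. x v* (M::'a::field^'n^'n))"
  unfolding vm_tr by (rule matrix_vector_mul_linear_gen)

lemma row_axis: "axis i 1 v* (M::'a::field^'n^'n) = row i M"
  unfolding vec_eq_iff vector_matrix_mult_def row_def axis_def
  by (simp add: if_distrib[of "\<lambda>a. a * b" for b] cong: if_cong)

lemma subspace_rimg: "vec.subspace (rimg (M::'a::field^'n^'n))"
  unfolding rimg_def by (rule vec.linear_subspace_image[OF lin_vm vec.subspace_UNIV])

lemma subspace_rker: "vec.subspace (rker (M::'a::field^'n^'n))"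
  unfolding rker_def by (rule vec.linear_subspace_kernel[OF lin_vm])

lemma rimg_span: "rimg (M::'a::field^'n^'n) = vec.span (rows M)"
proof
  show "rimg M \<subseteq> vec.span (rows M)"
  proof
    fix y assume "y \<in> rimg M"
    then obtain x where "y = x v* M" unfolding rimg_def by auto
    then have "y = transpose M *v x" by simp
    then show "y \<in> vec.span (rows M)"
      using matrix_vector_mult_in_columnspace_gen[of "transpose M" x] by simp
  qed
  show "vec.span (rows M) \<subseteq> rimg M"
  proof (rule vec.span_minimal[OF _ subspace_rimg])
    show "rows M \<subseteq> rimg M" 
    proof
      fix v assume "v \<in> rows M"
      then obtain i where "v = row i M" unfolding rows_def by auto
      then have "v = axis i 1 v* M" by (simp add: row_axis)
      then show "v \<in> rimg M" unfolding rimg_def by auto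
    qed
  qed
qed

lemma rank_rimg: "rank (M::'a::field^'n^'n) = vec.dim (rimg M)"
  unfolding row_rank_def_gen rimg_span by simp

lemma rank_nullity_gen:
  fixes f :: "'a::field^'n \<Rightarrow> 'a^'n"
  assumes lf: "Vector_Spaces.linear (*s) (*s) f"
  shows "vec.dim {x. f x = 0} + vec.dim (range f) = CARD('n)"
proof -
  define K where "K = {x. f x = 0}"
  have sK: "vec.subspace K" unfolding K_def by (rule vec.linear_subspace_kernel[OF lf])
  obtain B0 where B0: "B0 \<subseteq> K" "vec.independent B0" "K \<subseteq> vec.span B0" "card B0 = vec.dim K"
    by (rule vec.basis_exists[of K]) simp
  obtain B where B: "B0 \<subseteq> B" "vec.independent B" "UNIV \<subseteq> vec.span B"
    by (rule vec.maximal_independent_subset_extend[of B0 UNIV, OF _ B0(2)]) simp_all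
  have fB: "finite B" using B(2) vec.finiteI_independent by blast
  have cB: "card B = CARD('n)"
    using vec.basis_card_eq_dim[of B UNIV] B vec_dim_card by auto
  define C where "C = B - B0"
  have indC: "vec.independent C" unfolding C_def using B(2) vec.independent_mono by blast
  have cC: "card C = card B - card B0" unfolding C_def using B(1) fB by (simp add: card_Diff_subset finite_subset)
  have cBB: "card B0 \<le> card B" using B(1) fB card_mono by blast
  have spB: "vec.span B = {x + y |x y. x \<in> vec.span B0 \<and> y \<in> vec.span C}"
  proof -
    have "B = B0 \<union> C" unfolding C_def using B(1) by blast
    then show ?thesis by (simp only: vec.span_Un)
  qed
  have dimsum: "vec.dim {x + y |x y. x \<in> vec.span B0 \<and> y \<in> vec.span C} + vec.dim (vec.span B0 \<inter> vec.span C)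
      = vec.dim (vec.span B0) + vec.dim (vec.span C)"
    by (rule vec.dim_sums_Int) auto
  have "vec.dim (vec.span B) = card B" using B(2) vec.dim_span_eq_card_independent by blast
  moreover have "vec.dim (vec.span B0) = card B0" using B0(2) vec.dim_span_eq_card_independent by blast
  moreover have "vec.dim (vec.span C) = card C" using indC vec.dim_span_eq_card_independent by blast
  ultimately have "vec.dim (vec.span B0 \<inter> vec.span C) = 0" using dimsum spB cC cBB by simp
  then have int0: "vec.span B0 \<inter> vec.span C \<subseteq> {0}" by simp
  have spB0K: "vec.span B0 \<subseteq> K" using B0(1) sK vec.span_minimal by blast
  have inj: "inj_on f (vec.span C)"
  proof -
    have "\<forall>x\<in>vec.span C. f x = 0 \<longrightarrow> x = 0"
    proof (intro ballI impI)
      fix x assume x: "x \<in> vec.span C" "f x = 0"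
      then have "x \<in> vec.span B0" using B0(3) unfolding K_def by blast
      then show "x = 0" using x(1) int0 by blast
    qed
    then show ?thesis using vec.linear_inj_on_iff_eq_0[OF lf vec.subspace_span] by blast
  qed
  have rng: "range f = f ` vec.span C"
  proof
    show "f ` vec.span C \<subseteq> range f" by blast
    show "range f \<subseteq> f ` vec.span C"
    proof
      fix y assume "y \<in> range f"
      then obtain x where y: "y = f x" by blast
      have "x \<in> vec.span B" using B(3) by blast
      then obtain a b where ab: "x = a + b" "a \<in> vec.span B0" "b \<in> vec.span C" using spB by blast
      have "f a = 0" using ab(2) spB0K K_def by blast
      then have "y = f b" using y ab(1) vec.linear_add[OF lf] by simp
      then show "y \<in> f ` vec.span C" using ab(3) by blast
    qed
  qed
  have "vec.dim (range f) = card C"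
  proof -
    have "vec.dim (f ` vec.span C) = vec.dim (vec.span C)"
      by (rule vec.dim_image_eq[OF lf]) (use inj in \<open>simp add: vec.span_span\<close>)
    then show ?thesis using rng \<open>vec.dim (vec.span C) = card C\<close> by simp
  qed
  moreover have "vec.dim K = card B0" using B0(4) by simp
  ultimately show ?thesis using cB cC cBB K_def by simp
qed

lemma rank_nullity: "vec.dim (rker M) + rank (M::'a::field^'n^'n) = CARD('n)"
  unfolding rker_def rank_rimg rimg_def by (rule rank_nullity_gen[OF lin_vm])

lemma mat_eq_vm: "(\<And>x. x v* A = x v* (B::'a::field^'n^'n)) \<Longrightarrow> A = B"
proof -
  assume h: "\<And>x. x v* A = x v* B"
  have "\<And>i. row i A = row i B" using h[of "axis _ 1"] by (simp add: row_axis)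
  then show "A = B" by (simp add: vec_eq_iff row_def)
qed

lemma vm_mult: "x v* (A ** B) = (x v* A) v* (B::'a::field^'n^'n)"
  by (simp add: vector_matrix_mul_assoc)

lemma group_from_idem:
  fixes e :: "'a::field^'n^'n"
  assumes ee: "e ** e = e"
  defines "H \<equiv> {M. M ** e = M \<and> e ** M = M \<and> (\<exists>N. N ** e = N \<and> e ** N = N \<and> M ** N = e \<and> N ** M = e)}"
  shows "is_subgroup_mult H" and "e \<in> H"
proof -
  show eH: "e \<in> H" unfolding H_def using ee by blast
  show "is_subgroup_mult H"
    unfolding is_subgroup_mult_def
  proof (intro conjI ballI)
    fix A B assume A: "A \<in> H" and B: "B \<in> H"
    then obtain NA NB where NA: "NA ** e = NA" "e ** NA = NA" "A ** NA = e" "NA ** A = e"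
      and NB: "NB ** e = NB" "e ** NB = NB" "B ** NB = e" "NB ** B = e"
      and AA: "A ** e = A" "e ** A = A" and BB: "B ** e = B" "e ** B = B"
      unfolding H_def by blast
    have 1: "(A ** B) ** e = A ** B" using BB by (simp add: matrix_mul_assoc[symmetric])
    have 2: "e ** (A ** B) = A ** B" using AA by (simp add: matrix_mul_assoc)
    have 3: "(NB ** NA) ** e = NB ** NA" using NA by (simp add: matrix_mul_assoc[symmetric])
    have 4: "e ** (NB ** NA) = NB ** NA" using NB by (simp add: matrix_mul_assoc)
    have 5: "(A ** B) ** (NB ** NA) = e"
    proof -
      have "(A ** B) ** (NB ** NA) = A ** ((B ** NB) ** NA)" by (simp add: matrix_mul_assoc)
      also have "\<dots> = A ** NA" using NB NA by simp
      finally show ?thesis using NA by simp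
    qed
    have 6: "(NB ** NA) ** (A ** B) = e"
    proof -
      have "(NB ** NA) ** (A ** B) = NB ** ((NA ** A) ** B)" by (simp add: matrix_mul_assoc)
      also have "\<dots> = NB ** B" using NA BB by simp
      finally show ?thesis using NB by simp
    qed
    show "A ** B \<in> H" unfolding H_def using 1 2 3 4 5 6 by blast
  next
    show "\<exists>e'\<in>H. (\<forall>A\<in>H. e' ** A = A \<and> A ** e' = A) \<and> (\<forall>A\<in>H. \<exists>B\<in>H. A ** B = e' \<and> B ** A = e')"
    proof -
    have i1: "\<forall>A\<in>H. e ** A = A \<and> A ** e = A" unfolding H_def by blast
    have i2: "\<forall>A\<in>H. \<exists>B\<in>H. A ** B = e \<and> B ** A = e"
    proof
      fix A assume A: "A \<in> H"
      then obtain N where N: "N ** e = N" "e ** N = N" "A ** N = e" "N ** A = e"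
        and AA: "A ** e = A" "e ** A = A" unfolding H_def by blast
      have "N \<in> H" unfolding H_def using N AA by blast
      then show "\<exists>B\<in>H. A ** B = e \<and> B ** A = e" using N by blast
    qed
    show ?thesis using eH i1 i2 by blast
    qed
  qed
qed

lemma cpr_if:
  fixes C :: "'a::field^'n^'n"
  assumes h: "rimg C \<inter> rker C \<subseteq> {0}"
  shows "completely_pseudo_regular C"
proof -
  define f where "f = (\<lambda>x::'a^'n. x v* C)"
  define U where "U = rimg C"
  have lf: "Vector_Spaces.linear (*s) (*s) f" unfolding f_def by (rule lin_vm)
  have sU: "vec.subspace U" unfolding U_def by (rule subspace_rimg)
  have fU: "\<And>x. f x \<in> U" unfolding U_def rimg_def f_def by blast
  have inj: "inj_on f U"
  proof -
    have "\<forall>x\<in>U. f x = 0 \<longrightarrow> x = 0" using h unfolding U_def rker_def f_def by blast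
    then show ?thesis using vec.linear_inj_on_iff_eq_0[OF lf sU] by blast
  qed
  obtain g where g: "g ` UNIV \<subseteq> U" "Vector_Spaces.linear (*s) (*s) g" "\<forall>v\<in>U. g (f v) = v"
    using vec.linear_exists_left_inverse_on[OF lf sU inj] by blast
  have gU: "\<And>x. g x \<in> U" using g(1) by blast
  have gf: "\<And>v. v \<in> U \<Longrightarrow> g (f v) = v" using g(3) by blast
  have spU: "vec.span U = U" using sU by (simp add: vec.span_eq_iff)
  have fUU: "f ` U = U"
  proof (rule vec.subspace_dim_equal)
    show "vec.subspace (f ` U)" by (rule vec.linear_subspace_image[OF lf sU])
    show "vec.subspace U" by (rule sU)
    show "f ` U \<subseteq> U" using fU by blast
    have "vec.dim (f ` U) = vec.dim U"
      by (rule vec.dim_image_eq[OF lf]) (simp add: spU inj)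
    then show "vec.dim U \<le> vec.dim (f ` U)" by simp
  qed
  have fg: "\<And>u. u \<in> U \<Longrightarrow> f (g u) = u"
  proof -
    fix u assume "u \<in> U"
    then obtain v where v: "v \<in> U" "u = f v" using fUU by blast
    then show "f (g u) = u" using gf by simp
  qed
  define G where "G = transpose (matrix g)"
  have Gx: "\<And>x. x v* G = g x" unfolding G_def using matrix_works[OF g(2)] by simp
  have Cx: "\<And>x. x v* C = f x" unfolding f_def by simp
  define e where "e = C ** G"
  define N where "N = C ** G ** G"
  have ex: "\<And>x. x v* e = g (f x)" unfolding e_def by (simp add: vm_mult Gx Cx)
  have Nx: "\<And>x. x v* N = g (g (f x))" unfolding N_def by (simp add: vm_mult Gx Cx)
  have ee: "e ** e = e" by (rule mat_eq_vm) (simp add: vm_mult ex fg fU)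
  have Ce: "C ** e = C" by (rule mat_eq_vm) (simp add: vm_mult ex Cx gf fU)
  have eC: "e ** C = C" by (rule mat_eq_vm) (simp add: vm_mult ex Cx fg fU)
  have Ne: "N ** e = N" by (rule mat_eq_vm) (simp add: vm_mult ex Nx gf gU)
  have eN: "e ** N = N" by (rule mat_eq_vm) (simp add: vm_mult ex Nx fg fU)
  have CN: "C ** N = e" by (rule mat_eq_vm) (simp add: vm_mult ex Nx Cx gf fU)
  have NC: "N ** C = e" by (rule mat_eq_vm) (simp add: vm_mult ex Nx Cx fg gU)
  define H where "H = {M. M ** e = M \<and> e ** M = M \<and> (\<exists>N. N ** e = N \<and> e ** N = N \<and> M ** N = e \<and> N ** M = e)}"
  have "is_subgroup_mult H" unfolding H_def by (rule group_from_idem(1)[OF ee])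
  moreover have "C \<in> H" unfolding H_def using Ce eC Ne eN CN NC by blast
  ultimately show ?thesis unfolding completely_pseudo_regular_def by blast
qed

locale altml =
  fixes Phi :: "('n::finite \<Rightarrow> 'a::field^'n) \<Rightarrow> 'a" and P :: "'n set"
  assumes loc: "\<And>y z. (\<And>p. p \<in> P \<Longrightarrow> y p = z p) \<Longrightarrow> Phi y = Phi z"
    and add: "\<And>p y a b. p \<in> P \<Longrightarrow> Phi (y(p := a + b)) = Phi (y(p := a)) + Phi (y(p := b))"
    and smul: "\<And>p y c a. p \<in> P \<Longrightarrow> Phi (y(p := c *s a)) = c * Phi (y(p := a))"
    and alt: "\<And>p q y. p \<in> P \<Longrightarrow> q \<in> P \<Longrightarrow> p \<noteq> q \<Longrightarrow> y p = y q \<Longrightarrow> Phi y = 0"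
begin

lemma swap_neg:
  assumes p: "p \<in> P" and q: "q \<in> P" and pq: "p \<noteq> q"
  shows "Phi (y \<circ> Transposition.transpose p q) = - Phi y"
proof -
  define a where "a = y p"
  define b where "b = y q"
  define w where "w = y(q := a + b)"
  have z0: "Phi (w(p := a + b)) = 0"
    by (rule alt[OF p q pq]) (simp add: w_def pq)
  have e1: "Phi (w(p := a + b)) = Phi (w(p := a)) + Phi (w(p := b))" by (rule add[OF p])
  have t1: "w(p := a) = (y(p := a))(q := a + b)" unfolding w_def using pq by (simp add: fun_upd_twist)
  have t2: "w(p := b) = (y(p := b))(q := a + b)" unfolding w_def using pq by (simp add: fun_upd_twist)
  have e2: "Phi ((y(p := a))(q := a + b)) = Phi ((y(p := a))(q := a)) + Phi ((y(p := a))(q := b))"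
    by (rule add[OF q])
  have e3: "Phi ((y(p := b))(q := a + b)) = Phi ((y(p := b))(q := a)) + Phi ((y(p := b))(q := b))"
    by (rule add[OF q])
  have z1: "Phi ((y(p := a))(q := a)) = 0" by (rule alt[OF p q pq]) (simp add: pq)
  have z2: "Phi ((y(p := b))(q := b)) = 0" by (rule alt[OF p q pq]) (simp add: pq)
  have i1: "(y(p := a))(q := b) = y" unfolding a_def b_def by (simp add: fun_eq_iff)
  have i2: "(y(p := b))(q := a) = y \<circ> Transposition.transpose p q"
    unfolding a_def b_def using pq by (auto simp: fun_eq_iff Transposition.transpose_def)
  have "0 = Phi y + Phi (y \<circ> Transposition.transpose p q)"
    using z0 e1 t1 t2 e2 e3 z1 z2 i1 i2 by simp
  then show ?thesis by (simp add: eq_neg_iff_add_eq_0 add.commute)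
qed

lemma perm_zero:
  assumes s: "s permutes P"
  shows "\<forall>y. Phi y = 0 \<longrightarrow> Phi (y \<circ> s) = 0"
  using s finite
proof (induction rule: permutes_induct)
  case id
  then show ?case by simp
next
  case (swap a b p)
  show ?case
  proof (intro allI impI)
    fix y assume y0: "Phi y = 0"
    have "Phi (y \<circ> Transposition.transpose a b) = 0" using swap_neg[OF swap(1,2,3)] y0 by simp
    then have "Phi ((y \<circ> Transposition.transpose a b) \<circ> p) = 0" using swap(4) swap(5) by blast
    then show "Phi (y \<circ> (Transposition.transpose a b \<circ> p)) = 0" by (simp add: o_assoc)
  qed
qed

lemma zero_upd: "p \<in> P \<Longrightarrow> Phi (y(p := 0)) = 0"
  using smul[of p y 0 0] by (simp only: vector_smult_lzero mult_zero_left)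

lemma lin_sum:
  assumes p: "p \<in> P" and J: "finite J"
  shows "Phi (y(p := (\<Sum>j\<in>J. c j *s v j))) = (\<Sum>j\<in>J. c j * Phi (y(p := v j)))"
  using J
proof (induction rule: finite_induct)
  case empty
  then show ?case using zero_upd[OF p] by (simp only: sum.empty)
next
  case (insert j J)
  have "(\<Sum>j\<in>insert j J. c j *s v j) = c j *s v j + (\<Sum>j\<in>J. c j *s v j)"
    using insert by simp
  then have "Phi (y(p := (\<Sum>j\<in>insert j J. c j *s v j))) = Phi (y(p := c j *s v j + (\<Sum>j\<in>J. c j *s v j)))"
    by (simp only:)
  also have "\<dots> = Phi (y(p := c j *s v j)) + Phi (y(p := (\<Sum>j\<in>J. c j *s v j)))" by (rule add[OF p])
  also have "\<dots> = c j * Phi (y(p := v j)) + (\<Sum>j\<in>J. c j * Phi (y(p := v j)))"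
    using smul[OF p] insert.IH by (simp only:)
  also have "\<dots> = (\<Sum>j\<in>insert j J. c j * Phi (y(p := v j)))"
    using insert.hyps by simp
  finally show ?case .
qed

end

lemma altml_zero:
  fixes Phi :: "('n::finite \<Rightarrow> 'a::field^'n) \<Rightarrow> 'a"
  assumes am: "altml Phi P"
    and fS: "\<And>S. card S = card P \<Longrightarrow> bij_betw (fS S) P S"
    and zero: "\<And>S. card S = card P \<Longrightarrow> Phi (\<lambda>p. axis (fS S p) 1) = 0"
  shows "Phi y = 0"
proof -
  interpret altml Phi P by (rule am)
  have step3: "Phi (\<lambda>p. axis (g p) 1) = 0" for g :: "'n \<Rightarrow> 'n"
  proof (cases "inj_on g P")
    case False
    then obtain p q where "p \<in> P" "q \<in> P" "p \<noteq> q" "g p = g q" unfolding inj_on_def by blast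
    then show ?thesis by (intro alt[of p q]) auto
  next
    case True
    define S where "S = g ` P"
    have cS: "card S = card P" unfolding S_def using True card_image by blast
    define h where "h = fS S"
    have h: "bij_betw h P S" unfolding h_def by (rule fS[OF cS])
    define s where "s = (\<lambda>p. if p \<in> P then inv_into P h (g p) else p)"
    have bg: "bij_betw g P S" unfolding S_def using True by (simp add: bij_betw_def)
    have bh': "bij_betw (inv_into P h) S P" using h by (rule bij_betw_inv_into)
    have "bij_betw (inv_into P h \<circ> g) P P" using bg bh' by (rule bij_betw_trans)
    then have "bij_betw s P P" unfolding s_def by (rule bij_betw_cong[THEN iffD1, rotated]) auto
    then have sp: "s permutes P" by (rule bij_imp_permutes) (simp add: s_def)
    have z: "Phi (\<lambda>p. axis (h p) 1) = 0" unfolding h_def by (rule zero[OF cS])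
    have "Phi ((\<lambda>p. axis (h p) 1) \<circ> s) = 0" using perm_zero[OF sp] z by blast
    moreover have "Phi ((\<lambda>p. axis (h p) 1) \<circ> s) = Phi (\<lambda>p. axis (g p) 1)"
    proof (rule loc)
      fix p assume p: "p \<in> P"
      have "g p \<in> h ` P" using h p unfolding bij_betw_def S_def by auto
      then have "h (inv_into P h (g p)) = g p" by (rule f_inv_into_f)
      then show "((\<lambda>p. axis (h p) 1) \<circ> s) p = axis (g p) 1" using p by (simp add: s_def)
    qed
    ultimately show ?thesis by simp
  qed
  have main: "F \<subseteq> P \<longrightarrow> (\<forall>y::'n \<Rightarrow> 'a^'n. (\<forall>p\<in>P - F. \<exists>j. y p = axis j 1) \<longrightarrow> Phi y = 0)"
    if fF: "finite F" for F
    using fF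
  proof (induction F rule: finite_induct)
    case empty
    show ?case
    proof (intro impI allI)
      fix y :: "'n \<Rightarrow> 'a^'n" assume h: "\<forall>p\<in>P - {}. \<exists>j. y p = axis j 1"
      define g where "g p = (SOME j. y p = axis j 1)" for p
      have "Phi y = Phi (\<lambda>p. axis (g p) 1)"
      proof (rule loc)
        fix p assume "p \<in> P"
        then have "\<exists>j. y p = axis j 1" using h by blast
        then show "y p = axis (g p) 1" unfolding g_def by (rule someI_ex)
      qed
      then show "Phi y = 0" using step3 by simp
    qed
  next
    case (insert q F)
    show ?case
    proof (intro impI allI)
      fix y :: "'n \<Rightarrow> 'a^'n"
      assume FP: "insert q F \<subseteq> P" and h: "\<forall>p\<in>P - insert q F. \<exists>j. y p = axis j 1"
      have qP: "q \<in> P" using FP by blast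
      have IH: "\<forall>y::'n \<Rightarrow> 'a^'n. (\<forall>p\<in>P - F. \<exists>j. y p = axis j 1) \<longrightarrow> Phi y = 0" using insert.IH FP by blast
      have "y = y(q := (\<Sum>j\<in>UNIV. (y q $ j) *s axis j 1))" by (simp add: basis_expansion)
      then have "Phi y = (\<Sum>j\<in>UNIV. (y q $ j) * Phi (y(q := axis j 1)))"
        using lin_sum[OF qP, of UNIV y "\<lambda>j. y q $ j" "\<lambda>j. axis j 1"] by simp
      also have "\<dots> = 0"
      proof (rule sum.neutral, rule ballI)
        fix j :: 'n
        have "Phi (y(q := axis j 1)) = 0"
          by (rule IH[rule_format]) (use h in auto)
        then show "y q $ j * Phi (y(q := axis j 1)) = 0" by simp
      qed
      finally show "Phi y = 0" .
    qed
  qed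
  show ?thesis using main[of P] by simp
qed

definition ins :: "'n set \<Rightarrow> 'a::field^'n^'n \<Rightarrow> ('n::finite \<Rightarrow> 'a^'n) \<Rightarrow> 'a^'n^'n" where
  "ins P B y = (\<chi> i. if i \<in> P then y i else B $ i)"

lemma ins_upd: "p \<in> P \<Longrightarrow> ins P B (y(p := v)) = (\<chi> i. if i = p then v else ins P B y $ i)"
  by (simp add: ins_def vec_eq_iff)

lemma ins_row: "p \<in> P \<Longrightarrow> row p (ins P B y) = y p"
  by (simp add: ins_def row_def vec_lambda_eta)

lemma altml_det:
  fixes B :: "nat \<Rightarrow> 'a::field^'n::finite^'n"
  shows "altml (\<lambda>y. \<Sum>k\<in>K. c k * det (ins P (B k) y)) P"
proof
  fix y z :: "'n \<Rightarrow> 'a^'n"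
  assume h: "\<And>p. p \<in> P \<Longrightarrow> y p = z p"
  have "\<And>k. ins P (B k) y = ins P (B k) z" using h by (simp add: ins_def vec_eq_iff)
  then show "(\<Sum>k\<in>K. c k * det (ins P (B k) y)) = (\<Sum>k\<in>K. c k * det (ins P (B k) z))" by simp
next
  fix p y a b assume p: "p \<in> P"
  have "\<And>k. det (ins P (B k) (y(p := a + b))) = det (ins P (B k) (y(p := a))) + det (ins P (B k) (y(p := b)))"
    unfolding ins_upd[OF p] using det_row_add[of p "\<lambda>_. a" "\<lambda>_. b"] by simp
  then show "(\<Sum>k\<in>K. c k * det (ins P (B k) (y(p := a + b)))) =
    (\<Sum>k\<in>K. c k * det (ins P (B k) (y(p := a)))) + (\<Sum>k\<in>K. c k * det (ins P (B k) (y(p := b))))"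
    by (simp add: distrib_left sum.distrib)
next
  fix p y cc a assume p: "p \<in> P"
  have "\<And>k. det (ins P (B k) (y(p := cc *s a))) = cc * det (ins P (B k) (y(p := a)))"
    unfolding ins_upd[OF p] using det_row_mul[of p cc "\<lambda>_. a"] by simp
  then show "(\<Sum>k\<in>K. c k * det (ins P (B k) (y(p := cc *s a)))) = cc * (\<Sum>k\<in>K. c k * det (ins P (B k) (y(p := a))))"
    by (simp add: sum_distrib_left mult.left_commute)
next
  fix p q y assume p: "p \<in> P" and q: "q \<in> P" and pq: "p \<noteq> q" and e: "(y p :: 'a^'n) = y q"
  have "\<And>k. det (ins P (B k) y) = 0"
    by (rule det_identical_rows[OF pq]) (simp add: ins_row p q e)
  then show "(\<Sum>k\<in>K. c k * det (ins P (B k) y)) = 0" by simp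
qed

lemma det_vm: "det (A::'a::field^'n::finite^'n) \<noteq> 0 \<longleftrightarrow> inj (\<lambda>x. x v* A)"
proof -
  have "det A = det (matrix ((*v) (transpose A)))" by simp
  then have "det A \<noteq> 0 \<longleftrightarrow> inj ((*v) (transpose A))"
    using det_nz_iff_inj_gen[OF matrix_vector_mul_linear_gen[of "transpose A"]] by simp
  moreover have "(*v) (transpose A) = (\<lambda>x. x v* A)" by (simp add: fun_eq_iff)
  ultimately show ?thesis by simp
qed

lemma vm_sum: "x v* (A::'a::field^'n::finite^'n) = (\<Sum>i\<in>UNIV. x $ i *s A $ i)"
  by (simp add: vec_eq_iff vector_matrix_mult_def sum_component mult.commute)

lemma vm_ins: "x v* ins P B y = (\<Sum>i\<in>P. x $ i *s y i) + (\<Sum>i\<in>-P. x $ i *s B $ i)"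
proof -
  have "x v* ins P B y = (\<Sum>i\<in>P \<union> -P. x $ i *s ins P B y $ i)" by (simp add: vm_sum)
  also have "\<dots> = (\<Sum>i\<in>P. x $ i *s ins P B y $ i) + (\<Sum>i\<in>-P. x $ i *s ins P B y $ i)"
    by (rule sum.union_disjoint) auto
  also have "\<dots> = (\<Sum>i\<in>P. x $ i *s y i) + (\<Sum>i\<in>-P. x $ i *s B $ i)"
    by (simp add: ins_def)
  finally show ?thesis .
qed

lemma indep_fam:
  fixes y :: "'i \<Rightarrow> 'a::field^'n::finite"
  assumes I: "finite I" and inj: "inj_on y I" and ind: "vec.independent (y ` I)"
    and s: "(\<Sum>i\<in>I. c i *s y i) = 0"
  shows "\<forall>i\<in>I. c i = 0"
proof -
  define c' where "c' v = c (inv_into I y v)" for v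
  have "(\<Sum>v\<in>y ` I. c' v *s v) = (\<Sum>i\<in>I. c' (y i) *s y i)" by (rule sum.reindex[OF inj, unfolded o_def])
  also have "\<dots> = (\<Sum>i\<in>I. c i *s y i)" by (rule sum.cong) (simp_all add: c'_def inv_into_f_f[OF inj])
  finally have "(\<Sum>v\<in>y ` I. c' v *s v) = 0" using s by simp
  then have "\<forall>v\<in>y ` I. c' v = 0" using ind vec.independent_explicit by blast
  then show ?thesis by (simp add: c'_def inv_into_f_f[OF inj])
qed

lemma span_fam:
  fixes y :: "'i \<Rightarrow> 'a::field^'n::finite"
  assumes I: "finite I" and inj: "inj_on y I" and v: "v \<in> vec.span (y ` I)"
  shows "\<exists>a. v = (\<Sum>i\<in>I. a i *s y i)"
proof -
  have "v \<in> range (\<lambda>u. \<Sum>w\<in>y ` I. u w *s w)" using v vec.span_finite[of "y ` I"] I by blast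
  then obtain u where u: "v = (\<Sum>w\<in>y ` I. u w *s w)" by blast
  have "(\<Sum>w\<in>y ` I. u w *s w) = (\<Sum>i\<in>I. u (y i) *s y i)"
    by (rule sum.reindex[OF inj, unfolded o_def])
  then have "v = (\<Sum>i\<in>I. u (y i) *s y i)" using u by simp
  then show ?thesis by (rule exI[of _ "\<lambda>i. u (y i)"])
qed

lemma sum_in_span:
  fixes y :: "'i \<Rightarrow> 'a::field^'n::finite"
  shows "(\<Sum>i\<in>I. a i *s y i) \<in> vec.span (y ` I)"
  by (intro vec.span_sum vec.span_scale vec.span_base) auto

lemma det_nz_geo:
  fixes B :: "'a::field^'n::finite^'n"
  assumes iy: "inj_on y P" and ny: "vec.independent (y ` P)"
    and iB: "inj_on (\<lambda>i. B $ i) (-P)" and nB: "vec.independent ((\<lambda>i. B $ i) ` (-P))"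
    and dis: "vec.span (y ` P) \<inter> vec.span ((\<lambda>i. B $ i) ` (-P)) \<subseteq> {0}"
  shows "det (ins P B y) \<noteq> 0"
proof -
  have "inj (\<lambda>x. x v* ins P B y)"
  proof -
    have "\<forall>x. x v* ins P B y = 0 \<longrightarrow> x = 0"
    proof (intro allI impI)
      fix x :: "'a^'n" assume x0: "x v* ins P B y = 0"
      define s1 where "s1 = (\<Sum>i\<in>P. x $ i *s y i)"
      define s2 where "s2 = (\<Sum>i\<in>-P. x $ i *s B $ i)"
      have "s1 + s2 = 0" using x0 by (simp add: vm_ins s1_def s2_def)
      then have e: "s1 = - s2" by (simp add: eq_neg_iff_add_eq_0)
      have "s1 \<in> vec.span (y ` P)" unfolding s1_def by (rule sum_in_span)
      moreover have "s2 \<in> vec.span ((\<lambda>i. B $ i) ` (-P))" unfolding s2_def by (rule sum_in_span)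
      then have "s1 \<in> vec.span ((\<lambda>i. B $ i) ` (-P))" using e vec.span_neg by simp
      ultimately have "s1 = 0" using dis by blast
      then have s20: "s2 = 0" using e by simp
      have "\<forall>i\<in>P. x $ i = 0" by (rule indep_fam[OF _ iy ny]) (use \<open>s1 = 0\<close> s1_def in auto)
      moreover have "\<forall>i\<in>-P. x $ i = 0" by (rule indep_fam[OF _ iB nB]) (use s20 s2_def in auto)
      ultimately have P12: "\<forall>i\<in>P. x $ i = 0" "\<forall>i\<in>-P. x $ i = 0" by blast+
      show "x = 0" unfolding vec_eq_iff
      proof
        fix i show "x $ i = 0 $ i" by (cases "i \<in> P") (use P12 in auto)
      qed
    qed
    then show ?thesis using vec.linear_inj_iff_eq_0[OF lin_vm] by blast
  qed
  then show ?thesis using det_vm by blast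
qed

lemma det_zero_geo:
  fixes B :: "'a::field^'n::finite^'n"
  assumes iy: "inj_on y P" and iB: "inj_on (\<lambda>i. B $ i) (-P)"
    and z0: "z \<noteq> 0" and z1: "z \<in> vec.span (y ` P)" and z2: "z \<in> vec.span ((\<lambda>i. B $ i) ` (-P))"
  shows "det (ins P B y) = 0"
proof -
  obtain a where a: "z = (\<Sum>i\<in>P. a i *s y i)" using span_fam[OF _ iy z1] by (meson finite)
  obtain b where b: "z = (\<Sum>i\<in>-P. b i *s B $ i)" using span_fam[OF _ iB z2] by (meson finite)
  define x where "x = (\<chi> i. if i \<in> P then a i else - b i)"
  have "x v* ins P B y = (\<Sum>i\<in>P. a i *s y i) + (\<Sum>i\<in>-P. (- b i) *s B $ i)"
    unfolding vm_ins x_def by simp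
  also have "\<dots> = z - z" using a b by (simp add: sum_negf)
  finally have x0: "x v* ins P B y = 0" by simp
  have "x \<noteq> 0"
  proof
    assume "x = 0"
    have "\<forall>i\<in>P. a i = 0"
    proof
      fix i assume i: "i \<in> P"
      from \<open>x = 0\<close> have "x $ i = 0" by simp
      then show "a i = 0" using i by (simp add: x_def)
    qed
    then have "z = 0" using a by simp
    then show False using z0 by simp
  qed
  have "\<not> inj (\<lambda>x. x v* ins P B y)"
  proof
    assume inj: "inj (\<lambda>x. x v* ins P B y)"
    have "(\<lambda>x. x v* ins P B y) x = (\<lambda>x. x v* ins P B y) 0" using x0 by simp
    then have "x = 0" by (rule injD[OF inj])
    then show False using \<open>x \<noteq> 0\<close> by simp
  qed
  then show ?thesis using det_vm by blast
qed

lemma basis_fam: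
  fixes V :: "('a::field^'n::finite) set" and I :: "'i set"
  assumes sV: "vec.subspace V" and I: "finite I" and d: "vec.dim V = card I"
  shows "\<exists>y. inj_on y I \<and> vec.independent (y ` I) \<and> vec.span (y ` I) = V"
proof -
  obtain B where B: "B \<subseteq> V" "vec.independent B" "V \<subseteq> vec.span B" "card B = vec.dim V"
    by (rule vec.basis_exists[of V]) simp
  have fB: "finite B" using B(2) vec.finiteI_independent by blast
  have "\<exists>h. bij_betw h I B" using finite_same_card_bij[OF I fB] B(4) d by simp
  then obtain h where h: "bij_betw h I B" by blast
  have hI: "h ` I = B" using h by (simp add: bij_betw_def)
  have "vec.span B \<subseteq> V" by (rule vec.span_minimal[OF B(1) sV])
  then have "vec.span B = V" using B(3) by (rule antisym)
  moreover have "inj_on h I" using h by (simp add: bij_betw_def)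
  ultimately show ?thesis using B(2) hI by (intro exI[of _ h]) simp
qed

lemma sum_if_scale:
  fixes f :: "'i \<Rightarrow> 'a::field^'n::finite"
  assumes A: "finite A"
  shows "(\<Sum>i\<in>A. (if i = k then 1 else 0) *s f i) = (if k \<in> A then f k else 0)"
proof -
  have "(\<Sum>i\<in>A. (if i = k then 1 else 0) *s f i) = (\<Sum>i\<in>A. if k = i then f i else 0)"
  proof (rule sum.cong)
    fix i assume "i \<in> A"
    show "(if i = k then 1 else 0) *s f i = (if k = i then f i else 0)"
      by (cases "i = k") simp_all
  qed simp
  also have "\<dots> = (if k \<in> A then f k else 0)" using A by (simp add: sum.delta')
  finally show ?thesis .
qed

lemma lovasz:
  fixes U W :: "nat \<Rightarrow> ('a::field^'n::finite) set"
  assumes sub: "\<And>k. k < m \<Longrightarrow> vec.subspace (U k) \<and> vec.subspace (W k)"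
    and dU: "\<And>k. k < m \<Longrightarrow> vec.dim (U k) = r"
    and dW: "\<And>k. k < m \<Longrightarrow> vec.dim (W k) = CARD('n) - r"
    and diag: "\<And>k. k < m \<Longrightarrow> U k \<inter> W k \<subseteq> {0}"
    and tri: "\<And>k l. k < l \<Longrightarrow> l < m \<Longrightarrow> \<not> (U l \<inter> W k \<subseteq> {0})"
    and rd: "r \<le> CARD('n)"
  shows "m \<le> CARD('n) choose r"
proof -
  obtain P :: "'n set" where P: "card P = r"
    using obtain_subset_with_card_n[of r "UNIV :: 'n set"] rd by blast
  have cP: "card (-P) = CARD('n) - r"
  proof -
    have "-P = UNIV - P" by blast
    then show ?thesis using P by (simp add: card_Diff_subset)
  qed
  have exY: "\<forall>k. \<exists>y. k < m \<longrightarrow> (inj_on y P \<and> vec.independent (y ` P) \<and> vec.span (y ` P) = U k)"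
  proof
    fix k show "\<exists>y. k < m \<longrightarrow> (inj_on y P \<and> vec.independent (y ` P) \<and> vec.span (y ` P) = U k)"
    proof (cases "k < m")
      case True
      have "\<exists>y. inj_on y P \<and> vec.independent (y ` P) \<and> vec.span (y ` P) = U k"
        by (rule basis_fam) (use sub[OF True] dU[OF True] P in auto)
      then show ?thesis by blast
    qed simp
  qed
  obtain Y where Y0: "\<forall>k. k < m \<longrightarrow> (inj_on (Y k) P \<and> vec.independent (Y k ` P) \<and> vec.span (Y k ` P) = U k)"
    using choice[OF exY] by blast
  have Y: "\<And>k. k < m \<Longrightarrow> inj_on (Y k) P \<and> vec.independent (Y k ` P) \<and> vec.span (Y k ` P) = U k"
    using Y0 by blast
  have exZ: "\<forall>k. \<exists>z. k < m \<longrightarrow> (inj_on z (-P) \<and> vec.independent (z ` (-P)) \<and> vec.span (z ` (-P)) = W k)"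
  proof
    fix k show "\<exists>z. k < m \<longrightarrow> (inj_on z (-P) \<and> vec.independent (z ` (-P)) \<and> vec.span (z ` (-P)) = W k)"
    proof (cases "k < m")
      case True
      have "\<exists>z. inj_on z (-P) \<and> vec.independent (z ` (-P)) \<and> vec.span (z ` (-P)) = W k"
        by (rule basis_fam) (use sub[OF True] dW[OF True] cP in auto)
      then show ?thesis by blast
    qed simp
  qed
  obtain Z where Z0: "\<forall>k. k < m \<longrightarrow> (inj_on (Z k) (-P) \<and> vec.independent (Z k ` (-P)) \<and> vec.span (Z k ` (-P)) = W k)"
    using choice[OF exZ] by blast
  have Z: "\<And>k. k < m \<Longrightarrow> inj_on (Z k) (-P) \<and> vec.independent (Z k ` (-P)) \<and> vec.span (Z k ` (-P)) = W k"
    using Z0 by blast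
  define Bm where "Bm k = (\<chi> i. Z k i)" for k
  have BmZ: "(\<lambda>i. Bm k $ i) = Z k" for k unfolding Bm_def by simp
  define fS where "fS S = (SOME f. bij_betw f P S)" for S :: "'n set"
  have fS: "bij_betw (fS S) P S" if "card S = card P" for S
  proof -
    have "\<exists>f. bij_betw f P S" using finite_same_card_bij[of P S] that by simp
    then show ?thesis unfolding fS_def by (rule someI_ex)
  qed
  define v where "v k = (\<chi> S. if card S = r then det (ins P (Bm k) (\<lambda>p. axis (fS S p) 1)) else 0)" for k
  define D where "D k l = det (ins P (Bm k) (Y l))" for k l
  have Dz: "D k l = 0" if kl: "k < l" "l < m" for k l
  proof -
    obtain z where z: "z \<in> U l" "z \<in> W k" "z \<noteq> 0" using tri[OF kl] by blast
    show ?thesis unfolding D_def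
    proof (rule det_zero_geo)
      show "inj_on (Y l) P" using Y[OF kl(2)] by blast
      show "inj_on (\<lambda>i. Bm k $ i) (-P)" unfolding BmZ using Z kl by auto
      show "z \<noteq> 0" by (rule z(3))
      show "z \<in> vec.span (Y l ` P)" using Y[OF kl(2)] z(1) by simp
      show "z \<in> vec.span ((\<lambda>i. Bm k $ i) ` (-P))" unfolding BmZ using Z[of k] kl z(2) by simp
    qed
  qed
  have Dnz: "D l l \<noteq> 0" if l: "l < m" for l
    unfolding D_def
  proof (rule det_nz_geo)
    show "inj_on (Y l) P" "vec.independent (Y l ` P)" using Y[OF l] by blast+
    show "inj_on (\<lambda>i. Bm l $ i) (-P)" "vec.independent ((\<lambda>i. Bm l $ i) ` (-P))"
      unfolding BmZ using Z[OF l] by blast+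
    show "vec.span (Y l ` P) \<inter> vec.span ((\<lambda>i. Bm l $ i) ` (-P)) \<subseteq> {0}"
      unfolding BmZ using Y[OF l] Z[OF l] diag[OF l] by simp
  qed
  have KC: "\<forall>k<m. c k = 0" if c: "(\<Sum>k<m. c k *s v k) = 0" for c
  proof -
    define Phi where "Phi y = (\<Sum>k\<in>{..<m}. c k * det (ins P (Bm k) y))" for y
    have am: "altml Phi P" unfolding Phi_def by (rule altml_det)
    have zero: "Phi (\<lambda>p. axis (fS S p) 1) = 0" if "card S = card P" for S
    proof -
      have "(\<Sum>k<m. c k *s v k) $ S = 0" using c by simp
      then show ?thesis using that P by (simp add: Phi_def v_def sum_component)
    qed
    have Phi0: "Phi y = 0" for y by (rule altml_zero[OF am fS zero])
    have step: "\<forall>k. m - t \<le> k \<and> k < m \<longrightarrow> c k = 0" for t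
    proof (induction t)
      case 0
      show ?case by auto
    next
      case (Suc t)
      show ?case
      proof (cases "Suc t \<le> m")
        case False
        then have "\<forall>k. m - Suc t \<le> k \<and> k < m \<longrightarrow> m - t \<le> k \<and> k < m" by simp
        then show ?thesis using Suc.IH by blast
      next
        case True
        define l where "l = m - Suc t"
        have lm: "l < m" unfolding l_def using True by simp
        have "Phi (Y l) = (\<Sum>k\<in>{..<m}. c k * D k l)" unfolding Phi_def D_def by simp
        also have "\<dots> = c l * D l l + (\<Sum>k\<in>{..<m} - {l}. c k * D k l)"
          using lm by (subst sum.remove[of _ l]) auto
        also have "(\<Sum>k\<in>{..<m} - {l}. c k * D k l) = 0"
        proof (rule sum.neutral, rule ballI)
          fix k assume k: "k \<in> {..<m} - {l}"
          show "c k * D k l = 0"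
          proof (cases "k < l")
            case True
            then show ?thesis using Dz[OF True lm] by simp
          next
            case False
            then have "m - t \<le> k \<and> k < m" using k unfolding l_def by auto
            then show ?thesis using Suc.IH by simp
          qed
        qed
        finally have "c l * D l l = 0" using Phi0 by simp
        then have cl: "c l = 0" using Dnz[OF lm] by simp
        show ?thesis
        proof (intro allI impI)
          fix k assume k: "m - Suc t \<le> k \<and> k < m"
          show "c k = 0"
          proof (cases "k = l")
            case True then show ?thesis using cl by simp
          next
            case False
            then have "m - t \<le> k \<and> k < m" using k unfolding l_def by auto
            then show ?thesis using Suc.IH by simp
          qed
        qed
      qed
    qed
    show ?thesis using step[of m] by simp
  qed
  have injv: "inj_on v {..<m}"
  proof
    fix k l assume k: "k \<in> {..<m}" and l: "l \<in> {..<m}" and e: "v k = v l"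
    show "k = l"
    proof (rule ccontr)
      assume kl: "k \<noteq> l"
      define c where "c i = (if i = k then 1 else 0) - (if i = l then (1::'a) else 0)" for i
      have "(\<Sum>i<m. c i *s v i) = (\<Sum>i<m. (if i = k then 1 else 0) *s v i) - (\<Sum>i<m. (if i = l then 1 else 0) *s v i)"
        unfolding c_def by (simp add: vec.scale_left_diff_distrib sum_subtractf)
      also have "\<dots> = v k - v l" using k l by (simp add: sum_if_scale)
      finally have "(\<Sum>i<m. c i *s v i) = 0" using e by simp
      then have "c k = 0" using KC k by blast
      then show False using kl by (simp add: c_def)
    qed
  qed
  have indv: "vec.independent (v ` {..<m})"
    unfolding vec.independent_explicit
  proof (intro conjI allI impI)
    show "finite (v ` {..<m})" by simp
    fix c assume h: "(\<Sum>w\<in>v ` {..<m}. c w *s w) = 0"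
    have "(\<Sum>w\<in>v ` {..<m}. c w *s w) = (\<Sum>k<m. c (v k) *s v k)"
      by (rule sum.reindex[OF injv, unfolded o_def])
    then have "\<forall>k<m. c (v k) = 0" using KC[of "\<lambda>k. c (v k)"] h by simp
    then show "\<forall>w\<in>v ` {..<m}. c w = 0" by auto
  qed
  define R where "R = {S :: 'n set. card S = r}"
  define T where "T = (\<lambda>S. axis S (1::'a)) ` R"
  have fR: "finite R" by simp
  have cR: "card R = CARD('n) choose r"
  proof -
    have "R = {S. S \<subseteq> UNIV \<and> card S = r}" unfolding R_def by simp
    then show ?thesis using n_subsets[of "UNIV :: 'n set" r] by simp
  qed
  have sp: "v ` {..<m} \<subseteq> vec.span T"
  proof
    fix w assume "w \<in> v ` {..<m}"
    then obtain k where w: "w = v k" by blast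
    have "w = (\<Sum>S\<in>R. (w $ S) *s axis S 1)"
    proof (subst vec_eq_iff, rule allI)
      fix S0
      have "(\<Sum>S\<in>R. (w $ S) *s axis S (1::'a)) $ S0 = (\<Sum>S\<in>R. w $ S * (axis S (1::'a) $ S0))"
        by (simp add: sum_component)
      also have "\<dots> = (\<Sum>S\<in>R. if S0 = S then w $ S else 0)"
        by (rule sum.cong) (auto simp: axis_def)
      also have "\<dots> = (if S0 \<in> R then w $ S0 else 0)" using fR by (simp add: sum.delta)
      also have "\<dots> = w $ S0" using w by (simp add: v_def R_def)
      finally show "w $ S0 = (\<Sum>S\<in>R. (w $ S) *s axis S 1) $ S0" by simp
    qed
    also have "\<dots> \<in> vec.span T" unfolding T_def by (rule sum_in_span)
    finally show "w \<in> vec.span T" .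
  qed
  have "card (v ` {..<m}) \<le> card T"
    using vec.independent_span_bound[of T "v ` {..<m}"] indv sp unfolding T_def by simp
  moreover have "card (v ` {..<m}) = m" using card_image[OF injv] by simp
  moreover have "card T \<le> card R" unfolding T_def by (rule card_image_le[OF fR])
  ultimately show ?thesis using cR by simp
qed

lemma mprod_append: "mprod (xs @ ys) = mprod xs ** (mprod ys :: 'a::field^'n^'n)"
  by (induct xs) (simp_all add: mprod_def matrix_mul_assoc)

lemma mprod_single: "mprod [x] = (x :: 'a::field^'n^'n)"
  by (simp add: mprod_def)

lemma take_split: "i \<le> j \<Longrightarrow> take (Suc j) xs = take i xs @ take (j - i + 1) (drop i xs)"
  by (metis Suc_eq_plus1 add.commute le_add_diff_inverse2 take_add add_Suc_right)

lemma drop_split: "i \<le> j \<Longrightarrow> drop i xs = take (j - i + 1) (drop i xs) @ drop (Suc j) xs"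
proof -
  assume "i \<le> j"
  then have "drop (j - i + 1) (drop i xs) = drop (Suc j) xs" by simp
  then show ?thesis by (metis append_take_drop_id)
qed

lemma rimg_mult_sub: "rimg (A ** B) \<subseteq> rimg (B::'a::field^'n^'n)"
  unfolding rimg_def by (auto simp: vm_mult)

lemma rimg_mult_img: "rimg (A ** B) = (\<lambda>x. x v* B) ` rimg (A::'a::field^'n^'n)"
  unfolding rimg_def by (auto simp: vm_mult image_image)

lemma rker_mult_sub: "rker A \<subseteq> rker (A ** (B::'a::field^'n^'n))"
  unfolding rker_def by (auto simp: vm_mult)

lemma rank_mult_right: "rank ((A::'a::field^'n^'n) ** B) \<le> rank (B::'a::field^'n^'n)"
  unfolding rank_rimg[of "A ** B"] rank_rimg[of B] by (rule vec.dim_subset[OF rimg_mult_sub])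

lemma rank_mult_left: "rank ((A::'a::field^'n^'n) ** (B::'a::field^'n^'n)) \<le> rank A"
  unfolding rank_rimg[of "A ** B"] rank_rimg[of A] rimg_mult_img by (rule vec.dim_image_le[OF lin_vm])

lemma rank_le_d: "rank (A::'a::field^'n^'n) \<le> CARD('n)"
  unfolding rank_rimg by (rule dim_subset_UNIV_cart_gen)

lemma dim_rker: "vec.dim (rker M) = CARD('n) - rank (M::'a::field^'n^'n)"
  using rank_nullity[of M] by simp

lemma rimg_eq: "rank (L ** M) = rank M \<Longrightarrow> rimg (L ** M) = rimg (M::'a::field^'n^'n)"
  by (rule vec.subspace_dim_equal[OF subspace_rimg subspace_rimg rimg_mult_sub]) (simp add: rank_rimg)

lemma rker_eq: "rank (M ** R) = rank M \<Longrightarrow> rker (M ** R) = rker (M::'a::field^'n^'n)"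
proof -
  assume h: "rank (M ** R) = rank M"
  have "rker M = rker (M ** R)"
    by (rule vec.subspace_dim_equal[OF subspace_rker subspace_rker rker_mult_sub]) (simp add: dim_rker h)
  then show ?thesis by simp
qed

lemma consec:
  assumes h: "rank (X ** Y) = rank (X::'a::field^'n^'n)"
  shows "rimg X \<inter> rker Y \<subseteq> {0}"
proof
  fix z assume z: "z \<in> rimg X \<inter> rker Y"
  then obtain x where x: "z = x v* X" unfolding rimg_def by blast
  have "z v* Y = 0" using z unfolding rker_def by blast
  then have "x \<in> rker (X ** Y)" using x unfolding rker_def by (simp add: vm_mult)
  then have "x \<in> rker X" using rker_eq[OF h] by simp
  then show "z \<in> {0}" using x unfolding rker_def by simp
qed

primrec gst :: "(nat \<Rightarrow> nat) \<Rightarrow> nat \<Rightarrow> nat \<Rightarrow> nat" where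
  "gst f n 0 = 0"
| "gst f n (Suc s) = (if gst f n s < n then f (gst f n s) + 1 else gst f n s)"

lemma gst_le:
  assumes f: "\<And>i. i < n \<Longrightarrow> i \<le> f i \<and> f i < n"
  shows "gst f n s \<le> n"
  by (induct s) (use f in \<open>auto simp: Suc_le_eq\<close>)

lemma gst_mono_step:
  assumes f: "\<And>i. i < n \<Longrightarrow> i \<le> f i \<and> f i < n"
  shows "gst f n s \<le> gst f n (Suc s)"
  using f by (auto simp: le_SucI)

lemma gst_strict:
  assumes f: "\<And>i. i < n \<Longrightarrow> i \<le> f i \<and> f i < n" and lt: "gst f n s < n"
  shows "gst f n s < gst f n (Suc s)"
  using f[OF lt] lt by simp

lemma gst_ge:
  assumes f: "\<And>i. i < n \<Longrightarrow> i \<le> f i \<and> f i < n"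
  shows "min s n \<le> gst f n s"
proof (induct s)
  case 0 then show ?case by simp
next
  case (Suc s)
  show ?case
  proof (cases "gst f n s < n")
    case True
    then show ?thesis using Suc f[OF True] by auto
  next
    case False
    then show ?thesis using Suc gst_le[OF f, of s] by auto
  qed
qed

lemma gst_mono:
  assumes f: "\<And>i. i < n \<Longrightarrow> i \<le> f i \<and> f i < n" and st: "s \<le> t"
  shows "gst f n s \<le> gst f n t"
  using st
proof (induct t)
  case 0 then show ?case by simp
next
  case (Suc t)
  then show ?case using gst_mono_step[OF f, of t] by (cases "s = Suc t") auto
qed

lemma gst_strict_mono:
  assumes f: "\<And>i. i < n \<Longrightarrow> i \<le> f i \<and> f i < n" and st: "s < t" and lt: "gst f n s < n"
  shows "gst f n s < gst f n t"
proof -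
  have 1: "gst f n s < gst f n (Suc s)" by (rule gst_strict[OF f lt])
  have "Suc s \<le> t" using st by simp
  then have 2: "gst f n (Suc s) \<le> gst f n t" using gst_mono[OF f] by blast
  show ?thesis using 1 2 by simp
qed

theorem lemmaV15:
  fixes X Y T :: "('a::field_char_0^'n^'n) set"
    and r :: nat
    and As :: "('a^'n^'n) list"
  assumes K: "number_field TYPE('a)"
    and X_closed: "lz_closed X"
    and Y_closed: "lz_closed Y"
    and T_closed: "lz_closed T"
    and XY: "X \<union> {B \<in> gen_semigroup X. rank B > r} \<subseteq> Y"
    and As_ne: "As \<noteq> []"
    and As_X: "set As \<subseteq> X"
    and notY': "mprod As \<notin> lz_closure (prods_le (Y \<union> T) (2 * (CARD('n) choose r) + 3))"
    and rankA: "rank (mprod As) \<ge> r"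
  shows "\<exists>k l. k < l \<and> l < length As \<and>
           completely_pseudo_regular (mprod (take (l - k + 1) (drop k As))) \<and>
           rank (mprod (take (l - k + 1) (drop k As))) = r \<and>
           mprod (take (l - k + 1) (drop k As)) \<notin> Y \<union> T"
proof (rule ccontr)
  assume nex: "\<not> (\<exists>k l. k < l \<and> l < length As \<and>
           completely_pseudo_regular (mprod (take (l - k + 1) (drop k As))) \<and>
           rank (mprod (take (l - k + 1) (drop k As))) = r \<and>
           mprod (take (l - k + 1) (drop k As)) \<notin> Y \<union> T)"
  define n where "n = length As"
  define seg where "seg i j = mprod (take (j - i + 1) (drop i As))" for i j
  define A where "A = mprod As"
  define D where "D = CARD('n) choose r"
  define N where "N = 2 * D + 3"
  define Z where "Z = Y \<union> T"
  have n1: "1 \<le> n" using As_ne unfolding n_def by (cases As) auto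
  have notZ: "A \<notin> prods_le Z N"
  proof
    assume "A \<in> prods_le Z N"
    moreover have "prods_le Z N \<subseteq> lz_closure (prods_le Z N)" unfolding lz_closure_def by blast
    ultimately show False using notY' unfolding A_def Z_def N_def D_def by blast
  qed
  have pmono: "x \<in> prods_le Z N" if h1: "x \<in> prods_le Z k" and h2: "k \<le> N" for x k
  proof -
    obtain xs where "x = mprod xs" "xs \<noteq> []" "length xs \<le> k" "set xs \<subseteq> Z" using h1 unfolding prods_le_def by blast
    then show ?thesis unfolding prods_le_def using h2 by (intro CollectI exI[of _ xs]) simp
  qed
  have semi: "seg i j \<in> gen_semigroup X" if "i \<le> j" "j < n" for i j
  proof -
    have "take (j - i + 1) (drop i As) \<noteq> []" using that unfolding n_def by simp
    moreover have "set (take (j - i + 1) (drop i As)) \<subseteq> X"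
      using As_X set_drop_subset set_take_subset by (metis subset_trans)
    ultimately show ?thesis unfolding gen_semigroup_def seg_def by blast
  qed
  have bigY: "seg i j \<in> Y" if "i \<le> j" "j < n" "r < rank (seg i j)" for i j
    using XY semi[OF that(1,2)] that(3) by blast
  have split3: "A = mprod (take i As) ** seg i j ** mprod (drop (Suc j) As)" if "i \<le> j" for i j
  proof -
    have "As = take i As @ (take (j - i + 1) (drop i As) @ drop (Suc j) As)"
      using drop_split[OF that, of As] by simp
    then have "mprod As = mprod (take i As) ** (mprod (take (j - i + 1) (drop i As)) ** mprod (drop (Suc j) As))"
      by (metis mprod_append)
    then have "A = mprod (take i As) ** (seg i j ** mprod (drop (Suc j) As))"
      unfolding A_def seg_def by simp
    then show ?thesis by (simp add: matrix_mul_assoc)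
  qed
  have rank_ge: "r \<le> rank (seg i j)" if "i \<le> j" for i j
  proof -
    have "rank A = rank ((mprod (take i As) ** seg i j) ** mprod (drop (Suc j) As))"
      using split3[OF that] by simp
    also have "\<dots> \<le> rank (mprod (take i As) ** seg i j)" by (rule rank_mult_left)
    also have "\<dots> \<le> rank (seg i j)" by (rule rank_mult_right)
    finally show ?thesis using rankA unfolding A_def by simp
  qed
  have rankA_eq: "rank A = r"
  proof (rule ccontr)
    assume "rank A \<noteq> r"
    then have "r < rank A" using rankA unfolding A_def by simp
    moreover have "A \<in> gen_semigroup X" unfolding gen_semigroup_def A_def using As_ne As_X by blast
    ultimately have "A \<in> Y" using XY by blast
    then have "A \<in> prods_le Z 1" unfolding prods_le_def Z_def
      by (intro CollectI exI[of _ "[A]"]) (simp add: mprod_single)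
    then show False using notZ pmono[of A 1] unfolding N_def by simp
  qed
  have segii: "seg i i \<in> Z" if ilt: "i < n" for i
  proof -
    have d: "drop i As = As ! i # drop (Suc i) As"
      by (rule Cons_nth_drop_Suc[symmetric]) (use ilt in \<open>simp add: n_def\<close>)
    have "seg i i = mprod (take 1 (drop i As))" unfolding seg_def by simp
    also have "take 1 (drop i As) = [As ! i]" unfolding d by simp
    finally have e: "seg i i = As ! i" by (simp add: mprod_single)
    have "As ! i \<in> set As" using ilt unfolding n_def by (rule nth_mem)
    then have "As ! i \<in> X" using As_X by blast
    then have "As ! i \<in> Y" using XY by blast
    then show ?thesis unfolding e Z_def by blast
  qed
  define nxt where "nxt i = Max {j. i \<le> j \<and> j < n \<and> seg i j \<in> Z}" for i
  have fin: "finite {j. i \<le> j \<and> j < n \<and> seg i j \<in> Z}" for i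
  proof (rule finite_subset)
    show "{j. i \<le> j \<and> j < n \<and> seg i j \<in> Z} \<subseteq> {..<n}" by blast
  qed simp
  have nxt_prop: "i \<le> nxt i \<and> nxt i < n \<and> seg i (nxt i) \<in> Z" if "i < n" for i
  proof -
    have "i \<in> {j. i \<le> j \<and> j < n \<and> seg i j \<in> Z}" using that segii by simp
    then have ne: "{j. i \<le> j \<and> j < n \<and> seg i j \<in> Z} \<noteq> {}" by blast
    have "nxt i \<in> {j. i \<le> j \<and> j < n \<and> seg i j \<in> Z}" unfolding nxt_def by (rule Max_in[OF fin ne])
    then show ?thesis by simp
  qed
  have nxt_max: "j \<le> nxt i" if "i \<le> j" "j < n" "seg i j \<in> Z" for i j
  proof -
    have "j \<in> {j. i \<le> j \<and> j < n \<and> seg i j \<in> Z}" using that by simp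
    then show ?thesis unfolding nxt_def by (rule Max_ge[OF fin])
  qed
  have fN: "\<And>i. i < n \<Longrightarrow> i \<le> nxt i \<and> nxt i < n" using nxt_prop by blast
  define st where "st = gst nxt n"
  have st0: "st 0 = 0" unfolding st_def by simp
  have stS: "st (Suc s) = nxt (st s) + 1" if "st s < n" for s using that unfolding st_def by simp
  have st_le: "st s \<le> n" for s unfolding st_def by (rule gst_le[OF fN])
  have stsm: "st s < st t" if h1: "s < t" and h2: "st s < n" for s t
  proof -
    have "gst nxt n s < n" using h2 unfolding st_def .
    note gst_strict_mono[OF fN h1 this]
    then show ?thesis by (simp add: st_def)
  qed
  have stn: "st n = n" using gst_ge[OF fN, of n] st_le[of n] unfolding st_def by simp
  define p where "p = (LEAST s. st s = n)"
  have stp: "st p = n" unfolding p_def using stn by (rule LeastI)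
  have p_le: "p \<le> s" if "st s = n" for s unfolding p_def using that by (rule Least_le)
  have st_lt: "st s < n" if "s < p" for s
  proof -
    have "st s \<noteq> n" using p_le[of s] that by auto
    then show ?thesis using st_le[of s] by simp
  qed
  have prodp: "mprod (take (st s) As) \<in> prods_le Z s" if "1 \<le> s" "s \<le> p" for s
    using that
  proof (induction s)
    case 0 then show ?case by simp
  next
    case (Suc s)
    have sp: "s < p" using Suc.prems by simp
    have lt: "st s < n" by (rule st_lt[OF sp])
    have e: "st (Suc s) = Suc (nxt (st s))" using stS[OF lt] by simp
    have le: "st s \<le> nxt (st s)" using nxt_prop[OF lt] by blast
    have tk: "take (st (Suc s)) As = take (st s) As @ take (nxt (st s) - st s + 1) (drop (st s) As)"
      unfolding e by (rule take_split[OF le])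
    have sZ: "seg (st s) (nxt (st s)) \<in> Z" using nxt_prop[OF lt] by blast
    show ?case
    proof (cases "s = 0")
      case True
      have "take (st (Suc s)) As = take (nxt (st s) - st s + 1) (drop (st s) As)" using tk True st0 by simp
      then have "mprod (take (st (Suc s)) As) = seg (st s) (nxt (st s))" unfolding seg_def by simp
      then show ?thesis unfolding prods_le_def using sZ True
        by (intro CollectI exI[of _ "[seg (st s) (nxt (st s))]"]) (simp add: mprod_single)
    next
      case False
      have "mprod (take (st s) As) \<in> prods_le Z s" using Suc.IH False Suc.prems by simp
      then obtain xs where xs: "mprod (take (st s) As) = mprod xs" "xs \<noteq> []" "length xs \<le> s" "set xs \<subseteq> Z"
        unfolding prods_le_def by blast
      have "mprod (take (st (Suc s)) As) = mprod xs ** seg (st s) (nxt (st s))"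
        unfolding tk mprod_append xs(1) seg_def by simp
      also have "\<dots> = mprod (xs @ [seg (st s) (nxt (st s))])" by (simp add: mprod_append mprod_single)
      finally show ?thesis unfolding prods_le_def using xs sZ by (intro CollectI exI[of _ "xs @ [seg (st s) (nxt (st s))]"]) auto
    qed
  qed
  have p1: "1 \<le> p"
  proof (rule ccontr)
    assume "\<not> 1 \<le> p" then have "p = 0" by simp
    then show False using stp st0 n1 by simp
  qed
  have "A \<in> prods_le Z p" using prodp[OF p1 order.refl] stp unfolding A_def n_def by simp
  then have pN: "N < p" using notZ pmono by fastforce
  define Pre where "Pre s = mprod (take (st s) As)" for s
  define Suf where "Suf s = mprod (drop (st s) As)" for s
  have st_pos: "1 \<le> st s" if "1 \<le> s" for s
    using gst_ge[OF fN, of s] that n1 unfolding st_def by simp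
  have rPre: "rank (Pre s) = r" if "2 \<le> s" "s < p" for s
  proof -
    have sp1: "1 \<le> st s" using st_pos that by simp
    have eq: "Pre s = seg 0 (st s - 1)" unfolding Pre_def seg_def using sp1 by simp
    have lt: "st s - 1 < n" using st_lt[OF that(2)] by simp
    have ge: "r \<le> rank (Pre s)" unfolding eq by (rule rank_ge) simp
    show ?thesis
    proof (rule ccontr)
      assume "rank (Pre s) \<noteq> r"
      then have "r < rank (seg 0 (st s - 1))" using ge eq by simp
      then have "seg 0 (st s - 1) \<in> Z" using bigY[of 0 "st s - 1"] lt unfolding Z_def by simp
      then have "st s - 1 \<le> nxt 0" using nxt_max[of 0 "st s - 1"] lt by simp
      moreover have "st 1 = nxt 0 + 1" using stS[of 0] st0 n1 by simp
      moreover have "st 1 < st s" using stsm[of 1 s] st_lt[of 1] that by simp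
      ultimately show False using sp1 by simp
    qed
  qed
  have rSuf: "rank (Suf s) = r" if "s + 2 \<le> p" for s
  proof -
    have lt: "st s < n" using st_lt[of s] that by simp
    have eq: "Suf s = seg (st s) (n - 1)" unfolding Suf_def seg_def using lt unfolding n_def by simp
    have ge: "r \<le> rank (Suf s)" unfolding eq by (rule rank_ge) (use lt in simp)
    show ?thesis
    proof (rule ccontr)
      assume "rank (Suf s) \<noteq> r"
      then have "r < rank (seg (st s) (n - 1))" using ge eq by simp
      then have "seg (st s) (n - 1) \<in> Z" using bigY[of "st s" "n - 1"] lt unfolding Z_def by simp
      then have "n - 1 \<le> nxt (st s)" using nxt_max[of "st s" "n - 1"] lt by simp
      moreover have "nxt (st s) < n" using nxt_prop[OF lt] by blast
      ultimately have "nxt (st s) + 1 = n" using n1 by linarith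
      then have "st (Suc s) = n" using stS[OF lt] by simp
      then have "p \<le> Suc s" by (rule p_le)
      then show False using that by simp
    qed
  qed
  have AS: "A = Pre s ** Suf s" for s
    unfolding A_def Pre_def Suf_def by (metis append_take_drop_id mprod_append)
  have diag: "rimg (Pre s) \<inter> rker (Suf s) \<subseteq> {0}" if "2 \<le> s" "s + 2 \<le> p" for s
  proof (rule consec)
    show "rank (Pre s ** Suf s) = rank (Pre s)" using AS[of s] rankA_eq rPre[of s] that by simp
  qed
  have tri: "\<not> (rimg (Pre s) \<inter> rker (Suf s') \<subseteq> {0})" if "2 \<le> s'" "s' + 2 \<le> s" "s + 2 \<le> p" for s s'
  proof -
    define i where "i = st s'"
    define j where "j = st s - 1"
    have s'p: "Suc s' < p" using that by simp
    have lt': "st s' < n" using st_lt[of s'] that by simp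
    have ltS: "st (Suc s') < n" using st_lt[OF s'p] .
    have eS: "st (Suc s') = nxt i + 1" unfolding i_def using stS[OF lt'] .
    have a1: "st (Suc s') < st s" using stsm[of "Suc s'" s] ltS that by simp
    have a0: "st s' < st (Suc s')" using stsm[of s' "Suc s'"] lt' by simp
    have ij: "i < j" unfolding i_def j_def using a0 a1 by simp
    have jn: "j < n" unfolding j_def using st_lt[of s] that by simp
    have notZ': "seg i j \<notin> Z"
    proof
      assume "seg i j \<in> Z"
      then have "j \<le> nxt i" using nxt_max[of i j] ij jn by simp
      then show False using eS a1 unfolding j_def by simp
    qed
    have rM: "rank (seg i j) = r"
    proof -
      have "r \<le> rank (seg i j)" using rank_ge ij by simp
      moreover have "\<not> r < rank (seg i j)" using bigY[of i j] ij jn notZ' unfolding Z_def by auto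
      ultimately show ?thesis by simp
    qed
    have ncpr: "\<not> completely_pseudo_regular (seg i j)"
      using nex ij jn rM notZ' unfolding seg_def n_def Z_def by blast
    then have nd: "\<not> (rimg (seg i j) \<inter> rker (seg i j) \<subseteq> {0})" using cpr_if by blast
    have pre: "Pre s = mprod (take i As) ** seg i j"
    proof -
      have "st s = Suc j" unfolding j_def using a1 by simp
      then have "take (st s) As = take i As @ take (j - i + 1) (drop i As)"
        using take_split[of i j As] ij by simp
      then show ?thesis unfolding Pre_def seg_def by (simp add: mprod_append)
    qed
    have suf: "Suf s' = seg i j ** mprod (drop (Suc j) As)"
    proof -
      have "drop (st s') As = take (j - i + 1) (drop i As) @ drop (Suc j) As"
        unfolding i_def[symmetric] using drop_split[of i j As] ij by simp
      then show ?thesis unfolding Suf_def seg_def by (simp add: mprod_append)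
    qed
    have "rimg (Pre s) = rimg (seg i j)"
      unfolding pre by (rule rimg_eq) (use rPre[of s] that rM pre in simp)
    moreover have "rker (Suf s') = rker (seg i j)"
      unfolding suf by (rule rker_eq) (use rSuf[of s'] that rM suf in simp)
    ultimately show ?thesis using nd by simp
  qed
  define U where "U k = rimg (Pre (2 * k + 2))" for k
  define W where "W k = rker (Suf (2 * k + 2))" for k
  have "Suc D \<le> CARD('n) choose r"
  proof (rule lovasz[of "Suc D" U W r])
    fix k assume k: "k < Suc D"
    have kp: "2 * k + 2 + 2 \<le> p" using k pN unfolding N_def by simp
    show "vec.subspace (U k) \<and> vec.subspace (W k)" unfolding U_def W_def using subspace_rimg subspace_rker by blast
    show "vec.dim (U k) = r" unfolding U_def rank_rimg[symmetric] using rPre[of "2 * k + 2"] kp by simp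
    show "vec.dim (W k) = CARD('n) - r" unfolding W_def dim_rker using rSuf[OF kp] by simp
    show "U k \<inter> W k \<subseteq> {0}" unfolding U_def W_def by (rule diag) (use kp in simp_all)
  next
    fix k l assume kl: "k < l" "l < Suc D"
    have lp: "2 * l + 2 + 2 \<le> p" using kl pN unfolding N_def by simp
    show "\<not> (U l \<inter> W k \<subseteq> {0})" unfolding U_def W_def by (rule tri) (use kl lp in simp_all)
  next
    show "r \<le> CARD('n)" using rank_le_d[of A] rankA_eq by simp
  qed
  then show False unfolding D_def by simp
qed

end
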